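(* Let $\sigma=(M_1,M_2)$ be a schedule with machine 1 critical, and $k\ge1$. Suppose there exist sets $S'\subseteq M_1$ and $S''\subseteq M_2$ with $|S'|+|S''|=k$ and $0<\sum_{j\in S'}p_j-\sum_{j\in S''}p_j<\Delta$. If the randomized $k$-swap algorithm is repeated (with independent randomness) $\gamma=\dfrac{2^k}{\binom{k}{\lceil k/2\rceil}}$ times, the probability that it fails to find an improving schedule is at most $\frac1e$.
   Context: Problem $P2\|C_{\max}$: $n$ jobs with processing times $p_j>0$, two identical machines. A schedule $\sigma=(M_1,M_2)$ partitions the jobs into sets processed on machines 1 and 2; loads $L_i=\sum_{j\in M_i}p_j$, makespan $L_{\max}=\max_iL_i$, $L_{\min}=\min_iL_i$, $\Delta=L_{\max}-L_{\min}$; a machine with load $L_{\max}$ is critical. An improving schedule is one with strictly smaller makespan. Randomized $k$-swap algorithm (input $\sigma$, $k$; machine 1 critical): (1) assign each job independently and uniformly at random to $A$ or $B$; (2) for every $S_1\subseteq A$ with $|S_1|=\lceil k/2\rceil$ put $\sum_{j\in S_1\cap M_1}p_j-\sum_{j\in S_1\cap M_2}p_j$ (with reference to $S_1$) into $A_\Sigma$; (3) for every $S_2\subseteq B$ with $|S_2|=\lfloor k/2\rfloor$ put $\sum_{j\in S_2\cap M_1}p_j-\sum_{j\in S_2\cap M_2}p_j$ into $B_\Sigma$; (4) sort $B_\Sigma$ non-decreasingly; (5) for each $x\in A_\Sigma$ binary-search for $y\in B_\Sigma$ with $-x<y<\Delta-x$; if found, interchange the machine assignments of all jobs of the corresponding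 $S_1\cup S_2$ and return True (the algorithm succeeds); (6) otherwise return False (the algorithm fails). *)

theory Defs
  imports "HOL-Probability.Probability"
begin

definition load :: "('j \<Rightarrow> real) \<Rightarrow> 'j set \<Rightarrow> real" where
  "load p M = (\<Sum>j\<in>M. p j)"

definition is_schedule :: "'j set \<Rightarrow> 'j set \<Rightarrow> 'j set \<Rightarrow> bool" where
  "is_schedule J M1 M2 \<longleftrightarrow> M1 \<union> M2 = J \<and> M1 \<inter> M2 = {}"

definition swap_val :: "('j \<Rightarrow> real) \<Rightarrow> 'j set \<Rightarrow> 'j set \<Rightarrow> 'j set \<Rightarrow> real" where
  "swap_val p M1 M2 S = (\<Sum>j\<in>S \<inter> M1. p j) - (\<Sum>j\<in>S \<inter> M2. p j)"

(* One run of the randomized k-swap algorithm (machine 1 critical), given the random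
   assignment omega of jobs to A (omega j = True) or B (omega j = False). *)
definition kswap_succeeds ::
  "'j set \<Rightarrow> ('j \<Rightarrow> real) \<Rightarrow> 'j set \<Rightarrow> 'j set \<Rightarrow> nat \<Rightarrow> ('j \<Rightarrow> bool) \<Rightarrow> bool" where
  "kswap_succeeds J p M1 M2 k \<omega> \<longleftrightarrow>
     (\<exists>S1 S2. S1 \<subseteq> {j\<in>J. \<omega> j} \<and> card S1 = nat \<lceil>real k / 2\<rceil> \<and>
              S2 \<subseteq> {j\<in>J. \<not> \<omega> j} \<and> card S2 = nat \<lfloor>real k / 2\<rfloor> \<and>
              - swap_val p M1 M2 S1 < swap_val p M1 M2 S2 \<and>
              swap_val p M1 M2 S2 < (load p M1 - load p M2) - swap_val p M1 M2 S1)"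

definition assign_pmf :: "'j set \<Rightarrow> ('j \<Rightarrow> bool) pmf" where
  "assign_pmf J = Pi_pmf J False (\<lambda>_. bernoulli_pmf (1/2))"

definition runs_pmf :: "'j set \<Rightarrow> nat \<Rightarrow> (nat \<Rightarrow> 'j \<Rightarrow> bool) pmf" where
  "runs_pmf J m = Pi_pmf {..<m} (\<lambda>_. False) (\<lambda>_. assign_pmf J)"

definition fail_prob :: "'j set \<Rightarrow> ('j \<Rightarrow> real) \<Rightarrow> 'j set \<Rightarrow> 'j set \<Rightarrow> nat \<Rightarrow> nat \<Rightarrow> real" where
  "fail_prob J p M1 M2 k m =
     measure_pmf.prob (runs_pmf J m) {\<Omega>. \<forall>i<m. \<not> kswap_succeeds J p M1 M2 k (\<Omega> i)}"

definition gamma :: "nat \<Rightarrow> real" where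
  "gamma k = 2 ^ k / real (k choose nat \<lceil>real k / 2\<rceil>)"

end

theory Submission
  imports Defs
begin

lemma ceil_floor_half: "k - nat \<lceil>real k / 2\<rceil> = nat \<lfloor>real k / 2\<rfloor>"
proof (cases "even k")
  case True
  then obtain a where "k = 2*a" by blast
  then show ?thesis by simp
next
  case False
  then obtain a where k: "k = 2*a+1" using oddE by blast
  have "\<lceil>real k / 2\<rceil> = int a + 1" unfolding k by (intro ceiling_unique) auto
  moreover have "\<lfloor>real k / 2\<rfloor> = int a" unfolding k by (intro floor_unique) auto
  ultimately show ?thesis using k by simp
qed

lemma ceil_half_le: "nat \<lceil>real k / 2\<rceil> \<le> k"
proof -
  have "\<lceil>real k / 2\<rceil> \<le> \<lceil>real k\<rceil>" by (intro ceiling_mono) auto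
  then show ?thesis by simp
qed

lemma bern_half: "pmf (bernoulli_pmf (1/2)) v = 1/2"
  by (cases v) auto

lemma prob_G:
  fixes J S :: "'j set" and c :: nat
  assumes "finite J" "S \<subseteq> J"
  shows "measure_pmf.prob (assign_pmf J) {\<omega>. card {j\<in>S. \<omega> j} = c}
         = real (card S choose c) / 2 ^ card S"
proof -
  define b where "b = (\<lambda>_::'j. bernoulli_pmf (1/2))"
  define G where "G = {\<omega>::'j\<Rightarrow>bool. card {j\<in>S. \<omega> j} = c}"
  define r where "r = (\<lambda>(f::'j\<Rightarrow>bool) x. if x \<in> S then f x else False)"
  have finS: "finite S" using assms finite_subset by blast
  have sub: "Pi_pmf S False b = map_pmf r (Pi_pmf J False b)"
    unfolding r_def by (rule Pi_pmf_subset[OF assms])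
  have rG: "r -` G = G"
  proof -
    have "{j\<in>S. r \<omega> j} = {j\<in>S. \<omega> j}" for \<omega> unfolding r_def by auto
    then show ?thesis unfolding G_def by auto
  qed
  have "measure_pmf.prob (assign_pmf J) G = measure_pmf.prob (Pi_pmf S False b) G"
    unfolding assign_pmf_def b_def[symmetric] sub by (simp add: rG)
  also have "\<dots> = measure_pmf.prob (Pi_pmf S False b) (G \<inter> {f. \<forall>x. x \<notin> S \<longrightarrow> f x = False})"
  proof -
    let ?p = "Pi_pmf S False b"
    have "set_pmf ?p \<subseteq> {f. \<forall>x. x \<notin> S \<longrightarrow> f x = False}" by (rule set_Pi_pmf_subset[OF finS])
    then have "G \<inter> set_pmf ?p = (G \<inter> {f. \<forall>x. x \<notin> S \<longrightarrow> f x = False}) \<inter> set_pmf ?p" by blast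
    then show ?thesis by (metis measure_Int_set_pmf)
  qed
  also have "G \<inter> {f. \<forall>x. x \<notin> S \<longrightarrow> f x = False} = (\<lambda>T j. j \<in> T) ` {T. T \<subseteq> S \<and> card T = c}"
  proof (intro equalityI subsetI)
    fix f assume f: "f \<in> G \<inter> {f. \<forall>x. x \<notin> S \<longrightarrow> f x = False}"
    have "f = (\<lambda>j. j \<in> {j\<in>S. f j})" using f by auto
    moreover have "{j\<in>S. f j} \<in> {T. T \<subseteq> S \<and> card T = c}" using f unfolding G_def by auto
    ultimately show "f \<in> (\<lambda>T j. j \<in> T) ` {T. T \<subseteq> S \<and> card T = c}" by blast
  next
    fix f assume "f \<in> (\<lambda>T j. j \<in> T) ` {T. T \<subseteq> S \<and> card T = c}"
    then obtain T where T: "T \<subseteq> S" "card T = c" "f = (\<lambda>j. j \<in> T)" by auto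
    then have "{j\<in>S. f j} = T" by auto
    then show "f \<in> G \<inter> {f. \<forall>x. x \<notin> S \<longrightarrow> f x = False}" using T unfolding G_def by auto
  qed
  also have "measure_pmf.prob (Pi_pmf S False b) ((\<lambda>T j. j \<in> T) ` {T. T \<subseteq> S \<and> card T = c})
      = (\<Sum>f\<in>(\<lambda>T j. j \<in> T) ` {T. T \<subseteq> S \<and> card T = c}. pmf (Pi_pmf S False b) f)"
    by (rule measure_measure_pmf_finite) (use finS in auto)
  also have "\<dots> = (\<Sum>f\<in>(\<lambda>T j. j \<in> T) ` {T. T \<subseteq> S \<and> card T = c}. (1/2) ^ card S)"
  proof (rule sum.cong[OF refl])
    fix f assume "f \<in> (\<lambda>T j. j \<in> T) ` {T. T \<subseteq> S \<and> card T = c}"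
    then have "\<forall>x. x \<notin> S \<longrightarrow> f x = False" by auto
    then have "pmf (Pi_pmf S False b) f = (\<Prod>x\<in>S. pmf (b x) (f x))" by (simp add: pmf_Pi'[OF finS])
    also have "\<dots> = (\<Prod>x\<in>S. 1/2)" unfolding b_def
      by (intro prod.cong refl) (simp add: bern_half)
    finally show "pmf (Pi_pmf S False b) f = (1/2) ^ card S" by simp
  qed
  also have "\<dots> = real (card ((\<lambda>T j. j \<in> T) ` {T. T \<subseteq> S \<and> card T = c})) * (1/2) ^ card S"
    by simp
  also have "card ((\<lambda>T j. j \<in> T) ` {T. T \<subseteq> S \<and> card T = c}) = card {T. T \<subseteq> S \<and> card T = c}"
  proof (rule card_image)
    show "inj_on (\<lambda>T j. j \<in> T) {T. T \<subseteq> S \<and> card T = c}"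
      by (intro inj_onI) (metis Collect_mem_eq)
  qed
  also have "\<dots> = card S choose c" by (rule n_subsets[OF finS])
  finally have "measure_pmf.prob (assign_pmf J) G = real (card S choose c) * (1/2) ^ card S" .
  then show ?thesis unfolding G_def power_one_over by simp
qed

lemma succ_lemma:
  fixes J :: "'j set" and p :: "'j \<Rightarrow> real" and M1 M2 S' S'' :: "'j set" and k :: nat
  assumes "finite J"
    and sch: "is_schedule J M1 M2"
    and "S' \<subseteq> M1" and "S'' \<subseteq> M2"
    and "card S' + card S'' = k"
    and "0 < (\<Sum>j\<in>S'. p j) - (\<Sum>j\<in>S''. p j)"
    and "(\<Sum>j\<in>S'. p j) - (\<Sum>j\<in>S''. p j) < load p M1 - load p M2"
    and om: "card {j\<in>S' \<union> S''. \<omega> j} = nat \<lceil>real k / 2\<rceil>"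
  shows "kswap_succeeds J p M1 M2 k \<omega>"
proof -
  define S where "S = S' \<union> S''"
  have SJ: "S \<subseteq> J" using assms(3,4) sch unfolding is_schedule_def S_def by blast
  have finS: "finite S" using SJ assms(1) finite_subset by blast
  have disj: "S' \<inter> S'' = {}" using assms(3,4) sch unfolding is_schedule_def by blast
  have fin1: "finite S'" "finite S''" using finS unfolding S_def by auto
  have cardS: "card S = k" unfolding S_def using card_Un_disjoint[OF fin1 disj] assms(5) by simp
  define S1 where "S1 = {j\<in>S. \<omega> j}"
  define S2 where "S2 = {j\<in>S. \<not> \<omega> j}"
  have c1: "card S1 = nat \<lceil>real k / 2\<rceil>" using om unfolding S1_def S_def .
  have "card S1 + card S2 = card S" unfolding S1_def S2_def
    by (subst card_Un_disjoint[symmetric]) (use finS in \<open>auto intro: arg_cong[where f=card]\<close>)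
  then have c2: "card S2 = nat \<lfloor>real k / 2\<rfloor>" using c1 cardS ceil_floor_half[of k] by simp
  have SM1: "S \<inter> M1 = S'" and SM2: "S \<inter> M2 = S''"
    using assms(3,4) sch unfolding is_schedule_def S_def by blast+
  have "swap_val p M1 M2 S1 + swap_val p M1 M2 S2 = swap_val p M1 M2 S"
  proof -
    have a: "(\<Sum>j\<in>S \<inter> M. p j) = (\<Sum>j\<in>S1 \<inter> M. p j) + (\<Sum>j\<in>S2 \<inter> M. p j)" for M
    proof -
      have "S \<inter> M = (S1 \<inter> M) \<union> (S2 \<inter> M)" unfolding S1_def S2_def by blast
      moreover have "(S1 \<inter> M) \<inter> (S2 \<inter> M) = {}" unfolding S1_def S2_def by blast
      moreover have "finite (S1 \<inter> M)" "finite (S2 \<inter> M)" using finS unfolding S1_def S2_def by auto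
      ultimately show ?thesis by (simp add: sum.union_disjoint)
    qed
    show ?thesis unfolding swap_val_def using a[of M1] a[of M2] by simp
  qed
  also have "swap_val p M1 M2 S = (\<Sum>j\<in>S'. p j) - (\<Sum>j\<in>S''. p j)"
    unfolding swap_val_def SM1 SM2 ..
  finally have eq: "swap_val p M1 M2 S1 + swap_val p M1 M2 S2 = (\<Sum>j\<in>S'. p j) - (\<Sum>j\<in>S''. p j)" .
  show ?thesis unfolding kswap_succeeds_def
  proof (intro exI conjI)
    show "S1 \<subseteq> {j \<in> J. \<omega> j}" "S2 \<subseteq> {j \<in> J. \<not> \<omega> j}" using SJ unfolding S1_def S2_def by auto
  qed (use c1 c2 eq assms(6,7) in auto)
qed

theorem lemma1:
  fixes J :: "'j set" and p :: "'j \<Rightarrow> real" and M1 M2 S' S'' :: "'j set" and k :: nat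
  assumes "finite J"
    and "\<And>j. j \<in> J \<Longrightarrow> p j > 0"
    and "is_schedule J M1 M2"
    and "load p M1 \<ge> load p M2"
    and "k \<ge> 1"
    and "S' \<subseteq> M1" and "S'' \<subseteq> M2"
    and "card S' + card S'' = k"
    and "0 < (\<Sum>j\<in>S'. p j) - (\<Sum>j\<in>S''. p j)"
    and "(\<Sum>j\<in>S'. p j) - (\<Sum>j\<in>S''. p j) < load p M1 - load p M2"
  shows "fail_prob J p M1 M2 k (nat \<lceil>gamma k\<rceil>) \<le> 1 / exp 1"
proof -
  define S where "S = S' \<union> S''"
  define c where "c = nat \<lceil>real k / 2\<rceil>"
  define m where "m = nat \<lceil>gamma k\<rceil>"
  define q where "q = real (k choose c) / 2 ^ k"
  define F where "F = {\<omega>. \<not> kswap_succeeds J p M1 M2 k \<omega>}"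
  define G where "G = {\<omega>::'j\<Rightarrow>bool. card {j\<in>S. \<omega> j} = c}"
  have SJ: "S \<subseteq> J" using assms(3,6,7) unfolding is_schedule_def S_def by blast
  have finS: "finite S" using SJ assms(1) finite_subset by blast
  have disj: "S' \<inter> S'' = {}" using assms(3,6,7) unfolding is_schedule_def by blast
  have fin1: "finite S'" "finite S''" using finS unfolding S_def by auto
  have cardS: "card S = k" unfolding S_def using card_Un_disjoint[OF fin1 disj] assms(8) by simp
  have PG: "measure_pmf.prob (assign_pmf J) G = q"
    unfolding G_def q_def using prob_G[OF assms(1) SJ, of c] cardS by simp
  have FG: "F \<subseteq> - G"
    using succ_lemma[OF assms(1,3,6,7,8,9,10)] unfolding F_def G_def S_def c_def by blast
  have PF: "measure_pmf.prob (assign_pmf J) F \<le> 1 - q"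
  proof -
    have "measure_pmf.prob (assign_pmf J) F \<le> measure_pmf.prob (assign_pmf J) (- G)"
      using FG by (intro measure_pmf.finite_measure_mono) auto
    also have "\<dots> = 1 - q" using PG measure_pmf.prob_compl[of G "assign_pmf J"]
      by (simp add: Compl_eq_Diff_UNIV)
    finally show ?thesis .
  qed
  have cpos: "(k choose c) > 0" unfolding c_def using ceil_half_le[of k] by simp
  have qpos: "q > 0" unfolding q_def using cpos by simp
  have gq: "gamma k = 1 / q" unfolding gamma_def q_def c_def by simp
  have mq: "real m * q \<ge> 1"
  proof -
    have "real m \<ge> gamma k" unfolding m_def by linarith
    then have "real m * q \<ge> gamma k * q" using qpos by (intro mult_right_mono) auto
    then show ?thesis using gq qpos by simp
  qed
  have "fail_prob J p M1 M2 k m = measure_pmf.prob (runs_pmf J m) (Pi {..<m} (\<lambda>_. F))"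
    unfolding fail_prob_def F_def Pi_def by simp
  also have "\<dots> = (\<Prod>i<m. measure_pmf.prob (assign_pmf J) F)"
    unfolding runs_pmf_def by (rule measure_Pi_pmf_Pi) simp
  also have "\<dots> = (measure_pmf.prob (assign_pmf J) F) ^ m" by simp
  also have "\<dots> \<le> (1 - q) ^ m"
    using PF by (intro power_mono) auto
  also have "\<dots> \<le> exp (- q) ^ m"
  proof (rule power_mono)
    have "0 \<le> measure_pmf.prob (assign_pmf J) F" by (rule measure_nonneg)
    then show "0 \<le> 1 - q" using PF by linarith
    show "1 - q \<le> exp (- q)" using exp_ge_add_one_self[of "-q"] by simp
  qed
  also have "\<dots> = exp (- (real m * q))" by (simp add: exp_of_nat_mult[symmetric])
  also have "\<dots> \<le> exp (-1)" using mq by simp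
  also have "\<dots> = 1 / exp 1" by (simp add: exp_minus divide_inverse)
  finally show ?thesis unfolding m_def .
qed

end
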